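(* Let $(\Omega,\mathcal{F})$ be a measurable space, $\mathrm{B}_b$ the space of bounded real-valued measurable functions on $\Omega$, and $C\subset\mathrm{B}_b$ a linear subspace containing all constant functions. Let $H\colon C\to\mathbb{R}$ be a convex premium principle and let $R_{\mathrm{Max}}(X):=\inf\{H(X_0)\mid X_0\in C,\ X_0\ge X\}$ for $X\in\mathrm{B}_b$. Then $$R_{\mathrm{Max}}(X)=\max_{\mathbb{P}\in\mathrm{ba}_+^1}\big(\mathbb{E}_{\mathbb{P}}(X)-H^*(\mathbb{P})\big)\quad\text{for all }X\in\mathrm{B}_b,$$ and $$H^*(\mathbb{P})=\sup_{X\in\mathrm{B}_b}\big(\mathbb{E}_{\mathbb{P}}(X)-R_{\mathrm{Max}}(X)\big)\quad\text{for all }\mathbb{P}\in\mathrm{ba}_+^1.$$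
   Context: A premium principle is a map $H\colon C\to\mathbb{R}$ with $H(X+m)=H(X)+m$ for $X\in C$, $m\in\mathbb{R}$, $H(0)=0$, and $H(X)\ge 0$ for $X\in C$ with $X\ge 0$ (pointwise order). $H$ is convex if $H(\lambda X+(1-\lambda)Y)\le\lambda H(X)+(1-\lambda)H(Y)$ for $\lambda\in[0,1]$, $X,Y\in C$. $\mathrm{ba}_+^1$ denotes the set of finitely additive probability measures on $(\Omega,\mathcal{F})$, $\mathbb{E}_{\mathbb{P}}$ the corresponding integral of bounded measurable functions, and $H^*(\mathbb{P}):=\sup_{X\in C}(\mathbb{E}_{\mathbb{P}}(X)-H(X))\in[0,\infty]$. *)

theory Defs
  imports "HOL-Analysis.Analysis"
begin

text \<open>The measurable space (Omega, F) is represented by the type 'a as Omega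
  and a sigma-algebra F on UNIV.\<close>

definition meas_wrt :: "'a set set \<Rightarrow> ('a \<Rightarrow> real) \<Rightarrow> bool" where
  "meas_wrt F X \<longleftrightarrow> (\<forall>B \<in> sets borel. X -` B \<in> F)"

definition Bb :: "'a set set \<Rightarrow> ('a \<Rightarrow> real) set" where
  "Bb F = {X. meas_wrt F X \<and> (\<exists>c. \<forall>x. \<bar>X x\<bar> \<le> c)}"

definition ba1 :: "'a set set \<Rightarrow> ('a set \<Rightarrow> real) set" where
  "ba1 F = {P. (\<forall>A\<in>F. 0 \<le> P A) \<and> P UNIV = 1 \<and>
     (\<forall>A\<in>F. \<forall>B\<in>F. A \<inter> B = {} \<longrightarrow> P (A \<union> B) = P A + P B)}"

definition simple_meas :: "'a set set \<Rightarrow> ('a \<Rightarrow> real) \<Rightarrow> bool" where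
  "simple_meas F s \<longleftrightarrow> finite (range s) \<and> meas_wrt F s"

definition simple_int :: "('a set \<Rightarrow> real) \<Rightarrow> ('a \<Rightarrow> real) \<Rightarrow> real" where
  "simple_int P s = (\<Sum>y\<in>range s. y * P (s -` {y}))"

definition expect :: "'a set set \<Rightarrow> ('a set \<Rightarrow> real) \<Rightarrow> ('a \<Rightarrow> real) \<Rightarrow> real" where
  "expect F P X = Sup {simple_int P s | s. simple_meas F s \<and> s \<le> X}"

definition premium_principle :: "'a set set \<Rightarrow> ('a \<Rightarrow> real) set \<Rightarrow> (('a \<Rightarrow> real) \<Rightarrow> real) \<Rightarrow> bool" where
  "premium_principle F C H \<longleftrightarrow>
     (\<forall>X\<in>C. \<forall>m. H (\<lambda>x. X x + m) = H X + m) \<and> H (\<lambda>x. 0) = 0 \<and>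
     (\<forall>X\<in>C. (\<forall>x. 0 \<le> X x) \<longrightarrow> 0 \<le> H X)"

definition convex_pp :: "('a \<Rightarrow> real) set \<Rightarrow> (('a \<Rightarrow> real) \<Rightarrow> real) \<Rightarrow> bool" where
  "convex_pp C H \<longleftrightarrow> (\<forall>X\<in>C. \<forall>Y\<in>C. \<forall>l::real. 0 \<le> l \<and> l \<le> 1 \<longrightarrow>
     H (\<lambda>x. l * X x + (1 - l) * Y x) \<le> l * H X + (1 - l) * H Y)"

definition Hstar :: "'a set set \<Rightarrow> ('a \<Rightarrow> real) set \<Rightarrow> (('a \<Rightarrow> real) \<Rightarrow> real) \<Rightarrow> ('a set \<Rightarrow> real) \<Rightarrow> ereal" where
  "Hstar F C H P = (SUP X\<in>C. ereal (expect F P X - H X))"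

definition RMax :: "('a \<Rightarrow> real) set \<Rightarrow> (('a \<Rightarrow> real) \<Rightarrow> real) \<Rightarrow> ('a \<Rightarrow> real) \<Rightarrow> ereal" where
  "RMax C H X = (INF X0\<in>{X0\<in>C. \<forall>x. X x \<le> X0 x}. ereal (H X0))"

end

theory Submission
  imports Defs
begin


lemma hb_key:
  fixes s t a a' G1 G2 :: real
  assumes st: "s > 0" "t > 0"
    and ineq: "(s/(s+t)) * a + (1 - s/(s+t)) * a' \<le> (s/(s+t)) * G1 + (1 - s/(s+t)) * G2"
  shows "(a' - G2) / s \<le> (G1 - a) / t"
proof -
  have "s * a + t * a' \<le> s * G1 + t * G2"
  proof -
    have st0: "s + t \<noteq> 0" using st by simp
    have e: "1 - s/(s+t) = t/(s+t)"
    proof -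
      have "1 - s/(s+t) = (s+t)/(s+t) - s/(s+t)" using st0 by simp
      also have "\<dots> = t/(s+t)" using st0 by (simp add: field_simps)
      finally show ?thesis .
    qed
    have "(s * a + t * a')/(s+t) \<le> (s * G1 + t * G2)/(s+t)"
      using ineq unfolding e by (simp add: add_divide_distrib)
    then show ?thesis using st by (simp add: divide_le_cancel)
  qed
  then show ?thesis using st by (simp add: field_simps)
qed

lemma hb:
  fixes V :: "('a \<Rightarrow> real) set" and g :: "('a\<Rightarrow>real) \<Rightarrow> real"
  assumes V0: "(\<lambda>x. 0) \<in> V"
  and Vadd: "\<And>X Y. X\<in>V \<Longrightarrow> Y\<in>V \<Longrightarrow> (\<lambda>x. X x + Y x) \<in> V"
  and Vsc: "\<And>X c. X\<in>V \<Longrightarrow> (\<lambda>x. c * X x) \<in> V"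
  and gconv: "\<And>X Y l. X\<in>V \<Longrightarrow> Y\<in>V \<Longrightarrow> 0\<le>l \<Longrightarrow> l\<le>1 \<Longrightarrow>
        g (\<lambda>x. l * X x + (1-l) * Y x) \<le> l * g X + (1-l) * g Y"
  and g0: "0 \<le> g (\<lambda>x. 0)"
  shows "\<exists>L. (\<forall>X\<in>V. \<forall>Y\<in>V. L (\<lambda>x. X x + Y x) = L X + L Y) \<and>
             (\<forall>X\<in>V. \<forall>c. L (\<lambda>x. c * X x) = c * L X) \<and> (\<forall>X\<in>V. L X \<le> g X)"
proof -
  have Vlin: "(\<lambda>x. X x + c * Y x) \<in> V" if "X\<in>V" "Y\<in>V" for X Y c
    using Vadd[OF that(1) Vsc[OF that(2), of c]] by simp
  have Vdiff: "(\<lambda>x. X x - c * Y x) \<in> V" if "X\<in>V" "Y\<in>V" for X Y c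
    using Vlin[OF that, of "-c"] by simp
  define A where "A = {G. G \<subseteq> V \<times> UNIV
     \<and> (\<forall>p\<in>G. \<forall>q\<in>G. ((\<lambda>x. fst p x + fst q x), snd p + snd q) \<in> G)
     \<and> (\<forall>p\<in>G. \<forall>c. ((\<lambda>x. c * fst p x), c * snd p) \<in> G)
     \<and> (\<forall>p\<in>G. \<forall>q\<in>G. fst p = fst q \<longrightarrow> snd p = snd q)
     \<and> (\<forall>p\<in>G. snd p \<le> g (fst p))}"
  have "\<forall>Ch\<in>chains A. \<Union>Ch \<in> A"
  proof
    fix Ch assume ch: "Ch \<in> chains A"
    hence sub: "\<And>G. G\<in>Ch \<Longrightarrow> G\<in>A" and tot: "\<And>G1 G2. G1\<in>Ch \<Longrightarrow> G2\<in>Ch \<Longrightarrow> G1 \<subseteq> G2 \<or> G2 \<subseteq> G1"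
      by (auto simp: chains_def chain_subset_def)
    have two: "\<exists>G\<in>Ch. p\<in>G \<and> q\<in>G" if "p\<in>\<Union>Ch" "q\<in>\<Union>Ch" for p q
    proof -
      from that obtain G1 G2 where "G1\<in>Ch" "G2\<in>Ch" "p\<in>G1" "q\<in>G2" by blast
      with tot[of G1 G2] show ?thesis by blast
    qed
    show "\<Union>Ch \<in> A" unfolding A_def
    proof (intro CollectI conjI ballI allI impI)
      show "\<Union>Ch \<subseteq> V \<times> UNIV" using sub unfolding A_def by blast
    next
      fix p q assume "p\<in>\<Union>Ch" "q\<in>\<Union>Ch"
      then obtain G where "G\<in>Ch" "p\<in>G" "q\<in>G" using two by blast
      then show "((\<lambda>x. fst p x + fst q x), snd p + snd q) \<in> \<Union>Ch"
        using sub[of G] unfolding A_def by blast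
    next
      fix p c assume "p\<in>\<Union>Ch"
      then obtain G where "G\<in>Ch" "p\<in>G" by blast
      then show "((\<lambda>x. c * fst p x), c * snd p) \<in> \<Union>Ch"
        using sub[of G] unfolding A_def by blast
    next
      fix p q assume "p\<in>\<Union>Ch" "q\<in>\<Union>Ch" "fst p = fst q"
      moreover obtain G where "G\<in>Ch" "p\<in>G" "q\<in>G" using two calculation by blast
      ultimately show "snd p = snd q"
        using sub[of G] unfolding A_def by blast
    next
      fix p assume "p\<in>\<Union>Ch"
      then obtain G where "G\<in>Ch" "p\<in>G" by blast
      then show "snd p \<le> g (fst p)"
        using sub[of G] unfolding A_def by blast
    qed
  qed
  then obtain M where MA: "M\<in>A" and Mmax: "\<And>G. G\<in>A \<Longrightarrow> M \<subseteq> G \<Longrightarrow> G = M"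
    using Zorn_Lemma[of A] by blast
  have MA': "M \<subseteq> V \<times> UNIV
     \<and> (\<forall>p\<in>M. \<forall>q\<in>M. ((\<lambda>x. fst p x + fst q x), snd p + snd q) \<in> M)
     \<and> (\<forall>p\<in>M. \<forall>c. ((\<lambda>x. c * fst p x), c * snd p) \<in> M)
     \<and> (\<forall>p\<in>M. \<forall>q\<in>M. fst p = fst q \<longrightarrow> snd p = snd q)
     \<and> (\<forall>p\<in>M. snd p \<le> g (fst p))" using MA unfolding A_def by blast
  note MA1 = MA'[THEN conjunct1] and MA2 = MA'[THEN conjunct2, THEN conjunct1]
    and MA3 = MA'[THEN conjunct2, THEN conjunct2, THEN conjunct1]
    and MA4 = MA'[THEN conjunct2, THEN conjunct2, THEN conjunct2, THEN conjunct1]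
    and MA5 = MA'[THEN conjunct2, THEN conjunct2, THEN conjunct2, THEN conjunct2]
  have MV: "\<And>m a. (m,a)\<in>M \<Longrightarrow> m\<in>V" using MA1 by blast
  have Madd: "((\<lambda>x. m x + m' x), a + a') \<in> M" if "(m,a)\<in>M" "(m',a')\<in>M" for m a m' a'
    using MA2[rule_format, OF that] by simp
  have Msc: "((\<lambda>x. c * m x), c * a) \<in> M" if "(m,a)\<in>M" for m a c
    using MA3[rule_format, OF that, of c] by simp
  have Mfun: "a = a'" if "(m,a)\<in>M" "(m,a')\<in>M" for m a a'
    using MA4[rule_format, OF that] by simp
  have Mg: "a \<le> g m" if "(m,a)\<in>M" for m a
    using MA5[rule_format, OF that] by simp
  have Mne: "M \<noteq> {}"
  proof
    assume M: "M = {}"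
    have "{((\<lambda>x. 0::real), 0::real)} \<in> A" unfolding A_def using V0 g0 by auto
    from Mmax[OF this] M show False by auto
  qed
  have M0: "((\<lambda>x. 0), 0) \<in> M"
  proof -
    obtain m a where "(m,a)\<in>M" using Mne by auto
    from Msc[OF this, of 0] show ?thesis by simp
  qed
  have full: "\<exists>a. (X,a)\<in>M" if XV: "X\<in>V" for X
  proof (rule ccontr)
    assume "\<not> (\<exists>a. (X,a)\<in>M)"
    then have ynot: "\<And>a. (X,a)\<notin>M" by blast
    define y where "y = X"
    have yV: "y\<in>V" using XV y_def by simp
    have ynot': "\<And>a. (y,a)\<notin>M" using ynot y_def by simp
    have key: "(a' - g (\<lambda>x. m' x - s * y x)) / s \<le> (g (\<lambda>x. m x + t * y x) - a) / t"
      if ma: "(m,a)\<in>M" and ma': "(m',a')\<in>M" and s: "s>0" and t: "t>0" for m a m' a' s t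
    proof -
      define l where "l = s/(s+t)"
      have l0: "0 \<le> l" and l1: "l \<le> 1" using s t by (auto simp: l_def)
      have lt: "l * t = (1 - l) * s" using s t by (simp add: l_def field_simps)
      have "((\<lambda>x. (\<lambda>x. l * m x) x + (\<lambda>x. (1-l) * m' x) x), l * a + (1-l) * a') \<in> M"
        by (rule Madd[OF Msc[OF ma] Msc[OF ma']])
      then have "l * a + (1-l) * a' \<le> g (\<lambda>x. l * m x + (1-l) * m' x)" using Mg by auto
      also have "(\<lambda>x. l * m x + (1-l) * m' x) = (\<lambda>x. l * (m x + t * y x) + (1-l) * (m' x - s * y x))"
      proof
        fix x
        have "l * (m x + t * y x) + (1-l) * (m' x - s * y x) = l * m x + (1-l) * m' x + (l * t - (1 - l) * s) * y x"
          by (simp add: algebra_simps)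
        then show "l * m x + (1-l) * m' x = l * (m x + t * y x) + (1-l) * (m' x - s * y x)"
          using lt by simp
      qed
      also have "g \<dots> \<le> l * g (\<lambda>x. m x + t * y x) + (1-l) * g (\<lambda>x. m' x - s * y x)"
        using gconv[OF Vlin[OF MV[OF ma] yV] Vdiff[OF MV[OF ma'] yV] l0 l1] by simp
      finally show ?thesis using hb_key[OF s t] unfolding l_def by blast
    qed
    define S where "S = {(a' - g (\<lambda>x. m' x - s * y x)) / s | m' a' s. (m',a')\<in>M \<and> s > 0}"
    define c where "c = Sup S"
    have S1: "(0 - g (\<lambda>x. (\<lambda>x. 0) x - 1 * y x)) / 1 \<in> S" unfolding S_def mem_Collect_eq
      by (rule exI[of _ "\<lambda>x. 0"], rule exI[of _ 0], rule exI[of _ 1]) (simp add: M0)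
    have Sne: "S \<noteq> {}" using S1 by blast
    have Sbdd: "bdd_above S"
    proof (rule bdd_aboveI)
      fix z assume "z \<in> S"
      then obtain m' a' s where z: "z = (a' - g (\<lambda>x. m' x - s * y x)) / s" "(m',a')\<in>M" "s > 0"
        unfolding S_def by blast
      show "z \<le> (g (\<lambda>x. (\<lambda>x. 0) x + 1 * y x) - 0) / 1"
        unfolding z(1) by (rule key[OF M0 z(2) z(3) zero_less_one])
    qed
    have cup: "(a' - g (\<lambda>x. m' x - s * y x)) / s \<le> c" if "(m',a')\<in>M" "s>0" for m' a' s
    proof -
      have "(a' - g (\<lambda>x. m' x - s * y x)) / s \<in> S" unfolding S_def mem_Collect_eq
        by (rule exI[of _ m'], rule exI[of _ a'], rule exI[of _ s]) (simp add: that)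
      then show ?thesis unfolding c_def by (rule cSup_upper[OF _ Sbdd])
    qed
    have clow: "c \<le> (g (\<lambda>x. m x + t * y x) - a) / t" if ma: "(m,a)\<in>M" and t: "t>0" for m a t
      unfolding c_def
    proof (rule cSup_least[OF Sne])
      fix z assume "z \<in> S"
      then obtain m' a' s where z: "z = (a' - g (\<lambda>x. m' x - s * y x)) / s" "(m',a')\<in>M" "s > 0"
        unfolding S_def by blast
      show "z \<le> (g (\<lambda>x. m x + t * y x) - a) / t"
        unfolding z(1) by (rule key[OF ma z(2) z(3) t])
    qed
    define G' where "G' = {((\<lambda>x. m x + t * y x), a + t * c) | m a t. (m,a)\<in>M}"
    have G'E: "\<exists>m a t. p = ((\<lambda>x. m x + t * y x), a + t * c) \<and> (m,a)\<in>M" if "p \<in> G'" for p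
      using that unfolding G'_def by blast
    have G'E2: "P" if "p \<in> G'" "\<And>m a t. p = ((\<lambda>x. m x + t * y x), a + t * c) \<Longrightarrow> (m,a)\<in>M \<Longrightarrow> P" for p P
      using G'E[OF that(1)] by (elim exE conjE) (rule that(2); assumption)
    have G'I: "((\<lambda>x. m x + t * y x), a + t * c) \<in> G'" if "(m,a)\<in>M" for m a t
      unfolding G'_def mem_Collect_eq
      by (rule exI[of _ m], rule exI[of _ a], rule exI[of _ t]) (simp add: that)
    have G'A: "G' \<in> A" unfolding A_def
    proof (intro CollectI conjI ballI allI impI)
      show "G' \<subseteq> V \<times> UNIV"
      proof
        fix p assume "p \<in> G'"
        then obtain m a t where p: "p = ((\<lambda>x. m x + t * y x), a + t * c)" "(m,a)\<in>M"
          by (rule G'E2)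
        show "p \<in> V \<times> UNIV" using Vlin[OF MV[OF p(2)] yV] p(1) by simp
      qed
    next
      fix p q assume "p \<in> G'" "q \<in> G'"
      obtain m1 a1 t1 where p: "p = ((\<lambda>x. m1 x + t1 * y x), a1 + t1 * c)" "(m1,a1)\<in>M"
        using \<open>p \<in> G'\<close> by (rule G'E2)
      obtain m2 a2 t2 where q: "q = ((\<lambda>x. m2 x + t2 * y x), a2 + t2 * c)" "(m2,a2)\<in>M"
        using \<open>q \<in> G'\<close> by (rule G'E2)
      have "((\<lambda>x. (\<lambda>x. m1 x + m2 x) x + (t1+t2) * y x), (a1 + a2) + (t1+t2) * c) \<in> G'"
        by (rule G'I[OF Madd[OF p(2) q(2)]])
      moreover have "((\<lambda>x. (\<lambda>x. m1 x + m2 x) x + (t1+t2) * y x), (a1 + a2) + (t1+t2) * c)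
          = ((\<lambda>x. fst p x + fst q x), snd p + snd q)"
        by (simp add: p(1) q(1) algebra_simps)
      ultimately show "((\<lambda>x. fst p x + fst q x), snd p + snd q) \<in> G'" by simp
    next
      fix p c' assume "p \<in> G'"
      then obtain m a t where p: "p = ((\<lambda>x. m x + t * y x), a + t * c)" "(m,a)\<in>M"
        by (rule G'E2)
      have "((\<lambda>x. (\<lambda>x. c' * m x) x + (c' * t) * y x), c' * a + (c' * t) * c) \<in> G'"
        by (rule G'I[OF Msc[OF p(2)]])
      moreover have "((\<lambda>x. (\<lambda>x. c' * m x) x + (c' * t) * y x), c' * a + (c' * t) * c)
          = ((\<lambda>x. c' * fst p x), c' * snd p)"
        by (simp add: p(1) algebra_simps)
      ultimately show "((\<lambda>x. c' * fst p x), c' * snd p) \<in> G'" by simp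
    next
      fix p q assume "p \<in> G'" "q \<in> G'" and fpq: "fst p = fst q"
      obtain m1 a1 t1 where p: "p = ((\<lambda>x. m1 x + t1 * y x), a1 + t1 * c)" "(m1,a1)\<in>M"
        using \<open>p \<in> G'\<close> by (rule G'E2)
      obtain m2 a2 t2 where q: "q = ((\<lambda>x. m2 x + t2 * y x), a2 + t2 * c)" "(m2,a2)\<in>M"
        using \<open>q \<in> G'\<close> by (rule G'E2)
      have eq: "m1 x + t1 * y x = m2 x + t2 * y x" for x
        using fpq p(1) q(1) by (metis fst_conv)
      have tt: "t1 = t2"
      proof (rule ccontr)
        assume ne: "t1 \<noteq> t2"
        have "((\<lambda>x. (1/(t1-t2)) * (\<lambda>x. m2 x + (-1) * m1 x) x), (1/(t1-t2)) * (a2 + (-1) * a1)) \<in> M"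
          by (rule Msc[OF Madd[OF q(2) Msc[OF p(2)]]])
        moreover have "(\<lambda>x. (1/(t1-t2)) * (\<lambda>x. m2 x + (-1) * m1 x) x) = y"
        proof
          fix x
          have "(t1 - t2) * y x = m2 x - m1 x" using eq[of x] by (simp add: algebra_simps)
          then show "(1/(t1-t2)) * (\<lambda>x. m2 x + (-1) * m1 x) x = y x"
            using ne by (simp add: field_simps)
        qed
        ultimately show False using ynot' by simp
      qed
      have mm: "m1 = m2" using eq tt by auto
      have "a1 = a2" using Mfun p(2) q(2) mm by blast
      then show "snd p = snd q" using p(1) q(1) tt by simp
    next
      fix p assume "p \<in> G'"
      then obtain m a t where p: "p = ((\<lambda>x. m x + t * y x), a + t * c)" "(m,a)\<in>M"
        by (rule G'E2)
      have "a + t * c \<le> g (\<lambda>x. m x + t * y x)"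
      proof (cases "t > 0")
        case True
        from clow[OF p(2) True] True show ?thesis by (simp add: field_simps)
      next
        case False
        show ?thesis
        proof (cases "t = 0")
          case True then show ?thesis using Mg[OF p(2)] by simp
        next
          case False
          with \<open>\<not> t > 0\<close> have s: "-t > 0" by simp
          from cup[OF p(2) s] s have "a - g (\<lambda>x. m x - (-t) * y x) \<le> (-t) * c"
            by (simp add: field_simps)
          then show ?thesis by simp
        qed
      qed
      then show "snd p \<le> g (fst p)" using p(1) by simp
    qed
    have MG': "M \<subseteq> G'"
    proof
      fix p assume "p\<in>M"
      then obtain m a where p: "p = (m,a)" "(m,a)\<in>M" by (cases p) auto
      from G'I[OF p(2), of 0] show "p \<in> G'" using p(1) by simp
    qed
    have "(y, c) \<in> G'" using G'I[OF M0, of 1] by simp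
    with Mmax[OF G'A MG'] ynot' show False by simp
  qed
  define L where "L X = (THE a. (X,a)\<in>M)" for X
  have LM: "(X, L X)\<in>M" if "X\<in>V" for X
    unfolding L_def by (rule theI') (use full[OF that] Mfun in blast)
  show ?thesis
  proof (intro exI conjI ballI allI)
    fix X Y assume "X\<in>V" "Y\<in>V"
    from Madd[OF LM[OF this(1)] LM[OF this(2)]] LM[OF Vadd[OF this]]
    show "L (\<lambda>x. X x + Y x) = L X + L Y" using Mfun by blast
  next
    fix X c assume "X\<in>V"
    from Msc[OF LM[OF this]] LM[OF Vsc[OF this]]
    show "L (\<lambda>x. c * X x) = c * L X" using Mfun by blast
  next
    fix X assume "X\<in>V" from Mg[OF LM[OF this]] show "L X \<le> g X" .
  qed
qed


lemma meas_iff: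
  assumes sa: "sigma_algebra UNIV F"
  shows "meas_wrt F f \<longleftrightarrow> f \<in> borel_measurable (measure_of UNIV F (\<lambda>_. 0))"
  using sa by (simp add: meas_wrt_def in_borel_measurable_borel sigma_algebra.sets_measure_of_eq space_measure_of_conv sigma_algebra.sigma_sets_eq)

lemma ereal_minus_le_iff: "ereal a - h \<le> ereal b \<longleftrightarrow> ereal (a - b) \<le> h"
  by (cases h) auto

lemma Q_empty:
  assumes sa: "sigma_algebra UNIV F" and Q: "Q \<in> ba1 F"
  shows "Q {} = 0"
proof -
  have e: "{} \<in> F" using sa by (simp add: sigma_algebra_def algebra_def ring_of_sets_iff)
  from Q e have "Q ({} \<union> {}) = Q {} + Q {}" unfolding ba1_def by blast
  then show ?thesis by simp
qed

lemma Q_fin_add: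
  assumes sa: "sigma_algebra UNIV F" and Q: "Q \<in> ba1 F"
  shows "finite I \<Longrightarrow> (\<forall>i\<in>I. A i \<in> F) \<Longrightarrow> disjoint_family_on A I \<Longrightarrow>
     Q (\<Union>i\<in>I. A i) = (\<Sum>i\<in>I. Q (A i))"
proof (induction I rule: finite_induct)
  case empty then show ?case using Q_empty[OF sa Q] by simp
next
  case (insert j I)
  have U: "(\<Union>i\<in>I. A i) \<in> F"
    using insert.prems(1) sigma_algebra.axioms(1)[OF sa] insert.hyps(1)
    by (intro algebra.axioms(1)[THEN ring_of_sets.finite_UN]) (auto simp: algebra_def)
  have d: "A j \<inter> (\<Union>i\<in>I. A i) = {}"
    using insert.prems(2) insert.hyps(2) unfolding disjoint_family_on_def by auto
  have "Q (\<Union>i\<in>insert j I. A i) = Q (A j \<union> (\<Union>i\<in>I. A i))" by simp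
  also have "\<dots> = Q (A j) + Q (\<Union>i\<in>I. A i)"
    using Q U d insert.prems(1) unfolding ba1_def by blast
  also have "Q (\<Union>i\<in>I. A i) = (\<Sum>i\<in>I. Q (A i))"
    using insert.IH insert.prems disjoint_family_on_mono[of I "insert j I"] by auto
  finally show ?case using insert.hyps by simp
qed

lemma pre_in_F:
  assumes "simple_meas F s" shows "s -` {y} \<in> F"
  using assms unfolding simple_meas_def meas_wrt_def by auto

lemma simple_sum1:
  assumes sa: "sigma_algebra UNIV F" and Q: "Q \<in> ba1 F" and s: "simple_meas F s"
  shows "(\<Sum>y\<in>range s. Q (s -` {y})) = 1"
proof -
  have fin: "finite (range s)" using s unfolding simple_meas_def by simp
  have "Q (\<Union>y\<in>range s. s -` {y}) = (\<Sum>y\<in>range s. Q (s -` {y}))"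
    by (rule Q_fin_add[OF sa Q fin]) (auto simp: pre_in_F[OF s] disjoint_family_on_def)
  moreover have "(\<Union>y\<in>range s. s -` {y}) = UNIV" by auto
  ultimately show ?thesis using Q unfolding ba1_def by simp
qed

lemma simple_le:
  assumes sa: "sigma_algebra UNIV F" and Q: "Q \<in> ba1 F" and s: "simple_meas F s"
    and le: "\<And>x. s x \<le> c"
  shows "simple_int Q s \<le> c"
proof -
  have "simple_int Q s = (\<Sum>y\<in>range s. y * Q (s -` {y}))" by (simp add: simple_int_def)
  also have "\<dots> \<le> (\<Sum>y\<in>range s. c * Q (s -` {y}))"
  proof (rule sum_mono)
    fix y assume "y \<in> range s"
    moreover have "0 \<le> Q (s -` {y})" using Q pre_in_F[OF s] unfolding ba1_def by blast
    ultimately show "y * Q (s -` {y}) \<le> c * Q (s -` {y})" using le by (auto intro: mult_right_mono)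
  qed
  also have "\<dots> = c" using simple_sum1[OF sa Q s] by (simp add: sum_distrib_left[symmetric])
  finally show ?thesis .
qed

lemma const_simple:
  assumes sa: "sigma_algebra UNIV F"
  shows "simple_meas F (\<lambda>x. c)"
proof -
  have e: "{} \<in> F" using sa by (auto simp: sigma_algebra_def algebra_def ring_of_sets_iff)
  have u: "UNIV \<in> F" using algebra.top[OF sigma_algebra.axioms(1)[OF sa]] .
  have "(\<lambda>x::'a. c) -` B \<in> F" for B
    by (cases "c \<in> B") (auto simp: e u)
  then show ?thesis unfolding simple_meas_def meas_wrt_def by auto
qed

lemma expect_set:
  assumes sa: "sigma_algebra UNIV F" and Q: "Q \<in> ba1 F" and X: "\<And>x. \<bar>X x\<bar> \<le> c"
  shows "{simple_int Q s | s. simple_meas F s \<and> s \<le> X} \<noteq> {}"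
    and "bdd_above {simple_int Q s | s. simple_meas F s \<and> s \<le> X}"
proof -
  have "(\<lambda>x. -c) \<le> X"
  proof (rule le_funI)
    fix x show "-c \<le> X x" using X[of x] by (auto simp: abs_le_iff)
  qed
  then show "{simple_int Q s | s. simple_meas F s \<and> s \<le> X} \<noteq> {}"
    using const_simple[OF sa, of "-c"] by blast
  show "bdd_above {simple_int Q s | s. simple_meas F s \<and> s \<le> X}"
  proof (rule bdd_aboveI)
    fix z assume "z \<in> {simple_int Q s | s. simple_meas F s \<and> s \<le> X}"
    then obtain s where z: "z = simple_int Q s" "simple_meas F s" "s \<le> X" by blast
    have "\<And>x. s x \<le> c" using z(3) X by (auto simp: le_fun_def abs_le_iff intro: order_trans)
    then show "z \<le> c" using simple_le[OF sa Q z(2)] z(1) by simp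
  qed
qed

lemma expect_mono:
  assumes sa: "sigma_algebra UNIV F" and Q: "Q \<in> ba1 F" and X: "\<And>x. \<bar>X x\<bar> \<le> c"
    and Y: "\<And>x. \<bar>Y x\<bar> \<le> d" and XY: "\<And>x. X x \<le> Y x"
  shows "expect F Q X \<le> expect F Q Y"
  unfolding expect_def
proof (rule cSup_subset_mono)
  show "{simple_int Q s | s. simple_meas F s \<and> s \<le> X} \<noteq> {}" by (rule expect_set(1)[OF sa Q X])
  show "bdd_above {simple_int Q s | s. simple_meas F s \<and> s \<le> Y}" by (rule expect_set(2)[OF sa Q Y])
  show "{simple_int Q s | s. simple_meas F s \<and> s \<le> X} \<subseteq> {simple_int Q s | s. simple_meas F s \<and> s \<le> Y}"
    using XY by (auto simp: le_fun_def intro: order_trans)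
qed



definition bnd :: "('a \<Rightarrow> real) \<Rightarrow> bool" where
  "bnd X \<longleftrightarrow> (\<exists>c. \<forall>x. \<bar>X x\<bar> \<le> c)"

lemma bnd_add: "bnd X \<Longrightarrow> bnd Y \<Longrightarrow> bnd (\<lambda>x. X x + Y x)"
  unfolding bnd_def
proof (elim exE)
  fix c d assume c: "\<forall>x. \<bar>X x\<bar> \<le> c" and d: "\<forall>x. \<bar>Y x\<bar> \<le> d"
  have "\<forall>x. \<bar>X x + Y x\<bar> \<le> c + d"
  proof
    fix x show "\<bar>X x + Y x\<bar> \<le> c + d" using c[rule_format, of x] d[rule_format, of x] by linarith
  qed
  then show "\<exists>c. \<forall>x. \<bar>X x + Y x\<bar> \<le> c" by blast
qed

lemma bnd_scale: "bnd X \<Longrightarrow> bnd (\<lambda>x. a * X x)"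
  unfolding bnd_def
proof (elim exE)
  fix c assume c: "\<forall>x. \<bar>X x\<bar> \<le> c"
  have "\<forall>x. \<bar>a * X x\<bar> \<le> \<bar>a\<bar> * c"
  proof
    fix x show "\<bar>a * X x\<bar> \<le> \<bar>a\<bar> * c" using c[rule_format, of x] by (simp add: abs_mult mult_left_mono)
  qed
  then show "\<exists>c. \<forall>x. \<bar>a * X x\<bar> \<le> c" by blast
qed

lemma bnd_const: "bnd (\<lambda>x. c)"
  unfolding bnd_def by blast

lemma bnd_diff: "bnd X \<Longrightarrow> bnd Y \<Longrightarrow> bnd (\<lambda>x. X x - Y x)"
  using bnd_add[of X "\<lambda>x. (-1) * Y x"] bnd_scale[of Y "-1"] by simp

lemma Bb_bnd: "X \<in> Bb F \<Longrightarrow> bnd X"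
  unfolding Bb_def bnd_def by blast

locale setting =
  fixes F :: "'a set set" and C :: "('a \<Rightarrow> real) set" and H :: "('a \<Rightarrow> real) \<Rightarrow> real"
  assumes sa: "sigma_algebra UNIV F"
    and CB: "C \<subseteq> Bb F"
    and Cadd: "\<forall>X\<in>C. \<forall>Y\<in>C. (\<lambda>x. X x + Y x) \<in> C"
    and Csc: "\<forall>X\<in>C. \<forall>a::real. (\<lambda>x. a * X x) \<in> C"
    and Cconst: "\<forall>c::real. (\<lambda>x. c) \<in> C"
    and pp: "premium_principle F C H"
    and cv: "convex_pp C H"
begin

lemma Hcash: "X \<in> C \<Longrightarrow> H (\<lambda>x. X x + m) = H X + m"
  using pp unfolding premium_principle_def by blast

lemma Hpos: "X \<in> C \<Longrightarrow> (\<And>x. 0 \<le> X x) \<Longrightarrow> 0 \<le> H X"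
  using pp unfolding premium_principle_def by blast

lemma Hconv: "X \<in> C \<Longrightarrow> Y \<in> C \<Longrightarrow> 0 \<le> l \<Longrightarrow> l \<le> 1 \<Longrightarrow>
    H (\<lambda>x. l * X x + (1 - l) * Y x) \<le> l * H X + (1 - l) * H Y"
  using cv unfolding convex_pp_def by blast

lemma CaddI: "X \<in> C \<Longrightarrow> Y \<in> C \<Longrightarrow> (\<lambda>x. X x + Y x) \<in> C"
  using Cadd by blast
lemma CscI: "X \<in> C \<Longrightarrow> (\<lambda>x. a * X x) \<in> C"
  using Csc by blast
lemma CconstI: "(\<lambda>x. c) \<in> C"
  using Cconst by blast
lemma CcashI: "X \<in> C \<Longrightarrow> (\<lambda>x. X x + c) \<in> C"
  using CaddI[of X "\<lambda>x. c"] CconstI by simp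

definition SS :: "('a \<Rightarrow> real) \<Rightarrow> ('a \<Rightarrow> real) set" where
  "SS X = {X0\<in>C. \<forall>x. X x \<le> X0 x}"

definition R :: "('a \<Rightarrow> real) \<Rightarrow> real" where
  "R X = Inf (H ` SS X)"

lemma SS_ne: assumes "bnd X" shows "SS X \<noteq> {}"
proof -
  obtain c where c: "\<And>x. \<bar>X x\<bar> \<le> c" using assms unfolding bnd_def by blast
  have "(\<lambda>x. c) \<in> SS X" unfolding SS_def using Cconst c by (auto simp: abs_le_iff)
  then show ?thesis by blast
qed

lemma SS_lb: assumes "bnd X" shows "\<exists>b. \<forall>X0\<in>SS X. b \<le> H X0"
proof -
  obtain c where c: "\<And>x. \<bar>X x\<bar> \<le> c" using assms unfolding bnd_def by blast
  have "-c \<le> H X0" if X0: "X0 \<in> SS X" for X0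
  proof -
    have X0C: "X0 \<in> C" and ge: "\<And>x. X x \<le> X0 x" using X0 unfolding SS_def by auto
    have "(\<lambda>x. X0 x + c) \<in> C" using CcashI[OF X0C] .
    moreover have "0 \<le> X0 x + c" for x using ge[of x] c[of x] by (auto simp: abs_le_iff)
    ultimately have "0 \<le> H (\<lambda>x. X0 x + c)" using Hpos by blast
    then show ?thesis using Hcash[OF X0C, of c] by simp
  qed
  then show ?thesis by blast
qed

lemma SS_bdd: "bnd X \<Longrightarrow> bdd_below (H ` SS X)"
  using SS_lb[of X] unfolding bdd_below_def by blast

lemma RMax_R: "bnd X \<Longrightarrow> RMax C H X = ereal (R X)"
proof -
  assume b: "bnd X"
  have "RMax C H X = Inf (ereal ` (H ` SS X))"
    unfolding RMax_def SS_def by (simp add: image_comp o_def)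
  also have "\<dots> = ereal (R X)" unfolding R_def
    using ereal_Inf'[OF SS_bdd[OF b]] SS_ne[OF b] by simp
  finally show ?thesis .
qed

lemma R_le: "bnd X \<Longrightarrow> X0 \<in> SS X \<Longrightarrow> R X \<le> H X0"
  unfolding R_def by (rule cInf_lower) (auto simp: SS_bdd)

lemma R_ge: "bnd X \<Longrightarrow> (\<And>X0. X0 \<in> SS X \<Longrightarrow> b \<le> H X0) \<Longrightarrow> b \<le> R X"
  unfolding R_def by (rule cInf_greatest) (auto simp: SS_ne)

lemma R_mono: assumes "bnd X" "bnd Y" "\<And>x. X x \<le> Y x" shows "R X \<le> R Y"
proof (rule R_ge[OF assms(2)])
  fix Y0 assume "Y0 \<in> SS Y"
  then have "Y0 \<in> SS X" using assms(3) unfolding SS_def by (auto intro: order_trans)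
  then show "R X \<le> H Y0" by (rule R_le[OF assms(1)])
qed

lemma R_cash: assumes b: "bnd X" shows "R (\<lambda>x. X x + c) \<le> R X + c"
proof -
  have "R (\<lambda>x. X x + c) - c \<le> R X"
  proof (rule R_ge[OF b])
    fix X0 assume X0: "X0 \<in> SS X"
    then have X0C: "X0 \<in> C" unfolding SS_def by auto
    have "(\<lambda>x. X0 x + c) \<in> SS (\<lambda>x. X x + c)"
      using X0 CcashI[OF X0C] unfolding SS_def by auto
    then have "R (\<lambda>x. X x + c) \<le> H (\<lambda>x. X0 x + c)"
      by (rule R_le[OF bnd_add[OF b bnd_const]])
    then show "R (\<lambda>x. X x + c) - c \<le> H X0" using Hcash[OF X0C, of c] by simp
  qed
  then show ?thesis by simp
qed

lemma R_approx: assumes b: "bnd X" and e: "0 < e" shows "\<exists>X0\<in>SS X. H X0 < R X + e"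
proof -
  have "Inf (H ` SS X) < R X + e" unfolding R_def using e by simp
  then obtain z where "z \<in> H ` SS X" "z < R X + e"
    using cInf_lessD[of "H ` SS X"] SS_ne[OF b] by blast
  then show ?thesis by blast
qed

lemma R_conv: assumes bX: "bnd X" and bY: "bnd Y" and l0: "0 \<le> l" and l1: "l \<le> 1"
  shows "R (\<lambda>x. l * X x + (1 - l) * Y x) \<le> l * R X + (1 - l) * R Y"
proof (rule field_le_epsilon)
  fix e :: real assume e: "0 < e"
  obtain X0 where X0: "X0 \<in> SS X" "H X0 < R X + e" using R_approx[OF bX e] by blast
  obtain Y0 where Y0: "Y0 \<in> SS Y" "H Y0 < R Y + e" using R_approx[OF bY e] by blast
  have X0C: "X0 \<in> C" and Y0C: "Y0 \<in> C" using X0 Y0 unfolding SS_def by auto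
  have bc: "bnd (\<lambda>x. l * X x + (1 - l) * Y x)" by (intro bnd_add bnd_scale bX bY)
  have "(\<lambda>x. l * X0 x + (1 - l) * Y0 x) \<in> C"
  proof -
    show ?thesis by (rule CaddI[OF CscI[OF X0C] CscI[OF Y0C]])
  qed
  moreover have "l * X x + (1 - l) * Y x \<le> l * X0 x + (1 - l) * Y0 x" for x
  proof -
    have "X x \<le> X0 x" "Y x \<le> Y0 x" using X0 Y0 unfolding SS_def by auto
    then show ?thesis using l0 l1 by (intro add_mono mult_left_mono) auto
  qed
  ultimately have "(\<lambda>x. l * X0 x + (1 - l) * Y0 x) \<in> SS (\<lambda>x. l * X x + (1 - l) * Y x)"
    unfolding SS_def by auto
  then have "R (\<lambda>x. l * X x + (1 - l) * Y x) \<le> H (\<lambda>x. l * X0 x + (1 - l) * Y0 x)"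
    by (rule R_le[OF bc])
  also have "\<dots> \<le> l * H X0 + (1 - l) * H Y0" by (rule Hconv[OF X0C Y0C l0 l1])
  also have "\<dots> \<le> l * (R X + e) + (1 - l) * (R Y + e)"
    using X0(2) Y0(2) l0 l1 by (intro add_mono mult_left_mono) auto
  also have "\<dots> = l * R X + (1 - l) * R Y + e" by (simp add: algebra_simps)
  finally show "R (\<lambda>x. l * X x + (1 - l) * Y x) \<le> l * R X + (1 - l) * R Y + e" .
qed

lemma R_le_H: assumes "Z \<in> C" shows "R Z \<le> H Z"
proof -
  have "bnd Z" using assms CB Bb_bnd by blast
  moreover have "Z \<in> SS Z" using assms unfolding SS_def by auto
  ultimately show ?thesis by (rule R_le)
qed

end


lemma bnd_sum: "finite I \<Longrightarrow> (\<forall>i\<in>I. bnd (f i)) \<Longrightarrow> bnd (\<lambda>x. \<Sum>i\<in>I. f i x)"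
proof (induction I rule: finite_induct)
  case empty then show ?case by (simp add: bnd_const)
next
  case (insert j I)
  then show ?case using bnd_add[of "f j" "\<lambda>x. \<Sum>i\<in>I. f i x"] by simp
qed

lemma bnd_ind: "bnd (indicator A :: 'a \<Rightarrow> real)"
  unfolding bnd_def by (rule exI[of _ 1]) (simp add: indicator_def)

lemma bnd_finite_range: "finite (range s) \<Longrightarrow> bnd (s :: 'a \<Rightarrow> real)"
  unfolding bnd_def
  by (rule exI[of _ "Max (abs ` range s)"]) (auto intro: Max_ge)

lemma simple_decomp: "finite (range s) \<Longrightarrow> (s::'a\<Rightarrow>real) x = (\<Sum>y\<in>range s. y * indicator (s -` {y}) x)"
proof -
  assume fin: "finite (range s)"
  have "(\<Sum>y\<in>range s. y * indicator (s -` {y}) x) = (\<Sum>y\<in>range s. if y = s x then y else 0)"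
    by (rule sum.cong) (auto simp: indicator_def)
  also have "\<dots> = s x" using sum.delta[OF fin, of "s x" "\<lambda>y. y"] by simp
  finally show ?thesis by simp
qed

context setting
begin

lemma GI: assumes Q: "Q \<in> ba1 F" and XB: "X \<in> Bb F"
  shows "ereal (expect F Q X) - Hstar F C H Q \<le> RMax C H X"
proof -
  have bX: "bnd X" using XB by (rule Bb_bnd)
  obtain cX where cX: "\<And>x. \<bar>X x\<bar> \<le> cX" using XB unfolding Bb_def by blast
  have each: "ereal (expect F Q X - H X0) \<le> Hstar F C H Q" if X0: "X0 \<in> SS X" for X0
  proof -
    have X0C: "X0 \<in> C" and ge: "\<And>x. X x \<le> X0 x" using X0 unfolding SS_def by auto
    obtain c0 where c0: "\<And>x. \<bar>X0 x\<bar> \<le> c0" using X0C CB unfolding Bb_def by blast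
    have "expect F Q X \<le> expect F Q X0" by (rule expect_mono[OF sa Q cX c0 ge])
    then have "ereal (expect F Q X - H X0) \<le> ereal (expect F Q X0 - H X0)" by simp
    also have "\<dots> \<le> Hstar F C H Q" unfolding Hstar_def by (rule SUP_upper[OF X0C])
    finally show ?thesis .
  qed
  have "ereal (expect F Q X - R X) \<le> Hstar F C H Q"
  proof (cases "Hstar F C H Q")
    case (real h)
    have "expect F Q X - h \<le> R X"
    proof (rule R_ge[OF bX])
      fix X0 assume "X0 \<in> SS X"
      from each[OF this] real show "expect F Q X - h \<le> H X0" by simp
    qed
    then show ?thesis using real by simp
  next
    case PInf then show ?thesis by simp
  next
    case MInf
    obtain X0 where "X0 \<in> SS X" using SS_ne[OF bX] by blast
    from each[OF this] MInf show ?thesis by simp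
  qed
  then show ?thesis using RMax_R[OF bX] ereal_minus_le_iff by simp
qed

lemma subgrad: assumes bX: "bnd X"
  shows "\<exists>L. (\<forall>Y\<in>Collect bnd. \<forall>Z\<in>Collect bnd. L (\<lambda>x. Y x + Z x) = L Y + L Z) \<and>
             (\<forall>Y\<in>Collect bnd. \<forall>c. L (\<lambda>x. c * Y x) = c * L Y) \<and>
             (\<forall>Y\<in>Collect bnd. L Y \<le> R (\<lambda>x. X x + Y x) - R X)"
proof (rule hb)
  show "(\<lambda>x. 0) \<in> Collect bnd" by (simp add: bnd_const)
  show "(\<lambda>x. Y x + Z x) \<in> Collect bnd" if "Y \<in> Collect bnd" "Z \<in> Collect bnd" for Y Z
    using that bnd_add by auto
  show "(\<lambda>x. c * Y x) \<in> Collect bnd" if "Y \<in> Collect bnd" for Y c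
    using that bnd_scale by auto
  show "0 \<le> R (\<lambda>x. X x + 0) - R X" by simp
  fix Y Z :: "'a \<Rightarrow> real" and l :: real
  assume Y: "Y \<in> Collect bnd" and Z: "Z \<in> Collect bnd" and l0: "0 \<le> l" and l1: "l \<le> 1"
  have eq: "(\<lambda>x. X x + (l * Y x + (1 - l) * Z x)) = (\<lambda>x. l * (X x + Y x) + (1 - l) * (X x + Z x))"
    by (rule ext) (simp add: algebra_simps)
  have "R (\<lambda>x. X x + (l * Y x + (1 - l) * Z x)) \<le> l * R (\<lambda>x. X x + Y x) + (1 - l) * R (\<lambda>x. X x + Z x)"
    unfolding eq using R_conv[OF bnd_add[OF bX] bnd_add[OF bX] l0 l1] Y Z by simp
  then show "R (\<lambda>x. X x + (l * Y x + (1 - l) * Z x)) - R X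
     \<le> l * (R (\<lambda>x. X x + Y x) - R X) + (1 - l) * (R (\<lambda>x. X x + Z x) - R X)"
    by (simp add: algebra_simps)
qed

lemma main1: assumes XB: "X \<in> Bb F"
  shows "\<exists>P\<in>ba1 F. Hstar F C H P = ereal (expect F P X - R X)"
proof -
  have bX: "bnd X" using XB by (rule Bb_bnd)
  obtain L where L: "(\<forall>Y\<in>Collect bnd. \<forall>Z\<in>Collect bnd. L (\<lambda>x. Y x + Z x) = L Y + L Z) \<and>
             (\<forall>Y\<in>Collect bnd. \<forall>c. L (\<lambda>x. c * Y x) = c * L Y) \<and>
             (\<forall>Y\<in>Collect bnd. L Y \<le> R (\<lambda>x. X x + Y x) - R X)"
    using subgrad[OF bX] by blast
  have Ladd: "\<And>Y Z. bnd Y \<Longrightarrow> bnd Z \<Longrightarrow> L (\<lambda>x. Y x + Z x) = L Y + L Z"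
    using L by simp
  have Lsc: "\<And>Y c. bnd Y \<Longrightarrow> L (\<lambda>x. c * Y x) = c * L Y"
    using L by simp
  have Ldom: "\<And>Y. bnd Y \<Longrightarrow> L Y \<le> R (\<lambda>x. X x + Y x) - R X"
    using L by simp
  have Ldiff: "L (\<lambda>x. Y x - Z x) = L Y - L Z" if "bnd Y" "bnd Z" for Y Z
    using Ladd[OF that(1) bnd_scale[OF that(2), of "-1"]] Lsc[OF that(2), of "-1"] by simp
  have L0: "L (\<lambda>x. 0) = 0" using Lsc[OF bnd_const, of 0 0] by simp
  have Lnn: "0 \<le> L Y" if bY: "bnd Y" and nn: "\<And>x. 0 \<le> Y x" for Y
  proof -
    have bm: "bnd (\<lambda>x. - Y x)" using bnd_scale[OF bY, of "-1"] by simp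
    have "L (\<lambda>x. - Y x) \<le> R (\<lambda>x. X x + - Y x) - R X" using Ldom[OF bm] .
    also have "R (\<lambda>x. X x + - Y x) \<le> R X"
      by (rule R_mono[OF bnd_add[OF bX bm] bX]) (use nn in auto)
    finally have "L (\<lambda>x. - Y x) \<le> 0" by simp
    moreover have "L (\<lambda>x. - Y x) = - L Y" using Lsc[OF bY, of "-1"] by simp
    ultimately show ?thesis by simp
  qed
  have Lmono: "L Y \<le> L Z" if "bnd Y" "bnd Z" "\<And>x. Y x \<le> Z x" for Y Z
    using Lnn[OF bnd_diff[OF that(2) that(1)]] that(3) Ldiff[OF that(2) that(1)] by simp
  have L1: "L (\<lambda>x. 1) = 1"
  proof -
    have "L (\<lambda>x. 1) \<le> R (\<lambda>x. X x + 1) - R X" using Ldom[OF bnd_const] .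
    also have "\<dots> \<le> 1" using R_cash[OF bX, of 1] by simp
    finally have a: "L (\<lambda>x. 1) \<le> 1" .
    have "L (\<lambda>x. -1) \<le> R (\<lambda>x. X x + -1) - R X" using Ldom[OF bnd_const] .
    also have "\<dots> \<le> -1" using R_cash[OF bX, of "-1"] by simp
    finally have "L (\<lambda>x. -1) \<le> -1" .
    moreover have "L (\<lambda>x. -1) = - L (\<lambda>x. 1)" using Lsc[OF bnd_const, of "-1" 1] by simp
    ultimately show ?thesis using a by simp
  qed
  have Lconst: "L (\<lambda>x. c) = c" for c using Lsc[OF bnd_const, of c 1] L1 by simp
  define P where "P A = L (indicator A :: 'a \<Rightarrow> real)" for A
  have Pba: "P \<in> ba1 F" unfolding ba1_def
  proof (intro CollectI conjI ballI impI)
    fix A show "0 \<le> P A" unfolding P_def by (rule Lnn[OF bnd_ind]) (simp add: indicator_def)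
  next
    show "P UNIV = 1" unfolding P_def using L1 by simp
  next
    fix A B :: "'a set" assume "A \<inter> B = {}"
    then have "(indicator (A \<union> B) :: 'a \<Rightarrow> real) = (\<lambda>x. indicator A x + indicator B x)"
      by (intro ext) (auto simp: indicator_def)
    then show "P (A \<union> B) = P A + P B" unfolding P_def using Ladd[OF bnd_ind bnd_ind] by simp
  qed
  have Lsum: "finite I \<Longrightarrow> (\<forall>i\<in>I. bnd (f i)) \<Longrightarrow> L (\<lambda>x. \<Sum>i\<in>I. f i x) = (\<Sum>i\<in>I. L (f i))" for I f
  proof (induction I rule: finite_induct)
    case empty then show ?case using L0 by simp
  next
    case (insert j I)
    then show ?case using Ladd[of "f j" "\<lambda>x. \<Sum>i\<in>I. f i x"] bnd_sum[of I f] by simp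
  qed
  have simpleL: "simple_int P s = L s" if fin: "finite (range s)" for s
  proof -
    have eq: "s = (\<lambda>x. \<Sum>y\<in>range s. y * indicator (s -` {y}) x)"
      using simple_decomp[OF fin] by (rule ext)
    have "L (\<lambda>x. \<Sum>y\<in>range s. y * indicator (s -` {y}) x) = (\<Sum>y\<in>range s. L (\<lambda>x. y * indicator (s -` {y}) x))"
      by (rule Lsum[OF fin]) (use bnd_scale[OF bnd_ind] in auto)
    then have "L s = (\<Sum>y\<in>range s. L (\<lambda>x. y * indicator (s -` {y}) x))"
      using arg_cong[of _ _ L, OF eq] by simp
    also have "\<dots> = simple_int P s" unfolding simple_int_def P_def
      using Lsc[OF bnd_ind] by simp
    finally show ?thesis by simp
  qed
  have expL: "expect F P Y = L Y" if YB: "Y \<in> Bb F" for Y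
  proof -
    have bY: "bnd Y" using YB by (rule Bb_bnd)
    obtain c where c: "\<And>x. \<bar>Y x\<bar> \<le> c" using YB unfolding Bb_def by blast
    have Ym: "meas_wrt F Y" using YB unfolding Bb_def by simp
    let ?E = "{simple_int P s | s. simple_meas F s \<and> s \<le> Y}"
    have Ene: "?E \<noteq> {}" and Ebdd: "bdd_above ?E" using expect_set[OF sa Pba c] by auto
    have le: "expect F P Y \<le> L Y" unfolding expect_def
    proof (rule cSup_least[OF Ene])
      fix z assume "z \<in> ?E"
      then obtain s where z: "z = simple_int P s" "simple_meas F s" "s \<le> Y" by blast
      have fin: "finite (range s)" using z(2) unfolding simple_meas_def by simp
      have "L s \<le> L Y" by (rule Lmono[OF bnd_finite_range[OF fin] bY]) (use z(3) in \<open>auto simp: le_fun_def\<close>)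
      then show "z \<le> L Y" using z(1) simpleL[OF fin] by simp
    qed
    have ge: "L Y \<le> expect F P Y"
    proof (rule field_le_epsilon)
      fix e :: real assume e: "0 < e"
      define s where "s x = e * real_of_int \<lfloor>Y x / e\<rfloor>" for x
      have sY: "s x \<le> Y x" for x
      proof -
        have "real_of_int \<lfloor>Y x / e\<rfloor> \<le> Y x / e" by (rule of_int_floor_le)
        then have "e * real_of_int \<lfloor>Y x / e\<rfloor> \<le> e * (Y x / e)" using e by (intro mult_left_mono) auto
        then show ?thesis using e unfolding s_def by simp
      qed
      have Ys: "Y x - s x \<le> e" for x
      proof -
        have "Y x / e < real_of_int \<lfloor>Y x / e\<rfloor> + 1" by (rule real_of_int_floor_add_one_gt)
        then have "e * (Y x / e) < e * (real_of_int \<lfloor>Y x / e\<rfloor> + 1)" using e by (intro mult_strict_left_mono) auto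
        then show ?thesis using e unfolding s_def by (simp add: algebra_simps)
      qed
      have fin: "finite (range s)"
      proof (rule finite_subset)
        show "range s \<subseteq> (\<lambda>k. e * real_of_int k) ` {\<lfloor>-c / e\<rfloor> .. \<lfloor>c / e\<rfloor>}"
        proof
          fix z assume "z \<in> range s"
          then obtain x where x: "z = s x" by blast
          have "-c \<le> Y x" "Y x \<le> c" using c[of x] by (auto simp: abs_le_iff)
          then have "-c / e \<le> Y x / e" "Y x / e \<le> c / e" using e divide_right_mono[of "-c" "Y x" e] divide_right_mono[of "Y x" c e] by auto
          then have "\<lfloor>-c / e\<rfloor> \<le> \<lfloor>Y x / e\<rfloor>" "\<lfloor>Y x / e\<rfloor> \<le> \<lfloor>c / e\<rfloor>" by (auto intro: floor_mono)
          then show "z \<in> (\<lambda>k. e * real_of_int k) ` {\<lfloor>-c / e\<rfloor> .. \<lfloor>c / e\<rfloor>}"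
            unfolding x s_def by auto
        qed
        show "finite ((\<lambda>k. e * real_of_int k) ` {\<lfloor>-c / e\<rfloor> .. \<lfloor>c / e\<rfloor>})" by simp
      qed
      have sm: "meas_wrt F s"
      proof -
        let ?M = "measure_of UNIV F (\<lambda>_. 0)"
        have "Y \<in> borel_measurable ?M" using Ym meas_iff[OF sa] by simp
        then have "(\<lambda>x. Y x / e) \<in> borel_measurable ?M" by simp
        then have "(\<lambda>x. real_of_int \<lfloor>Y x / e\<rfloor>) \<in> borel_measurable ?M"
          using measurable_compose[OF _ borel_measurable_real_floor] by (simp add: o_def)
        then have "s \<in> borel_measurable ?M" unfolding s_def by simp
        then show ?thesis using meas_iff[OF sa] by simp
      qed
      have ssim: "simple_meas F s" unfolding simple_meas_def using fin sm by simp
      have bs: "bnd s" by (rule bnd_finite_range[OF fin])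
      have "L Y = L s + L (\<lambda>x. Y x - s x)" using Ldiff[OF bY bs] by simp
      also have "L (\<lambda>x. Y x - s x) \<le> L (\<lambda>x. e)"
        by (rule Lmono[OF bnd_diff[OF bY bs] bnd_const]) (use Ys in auto)
      also have "L s = simple_int P s" using simpleL[OF fin] by simp
      also have "simple_int P s \<le> expect F P Y" unfolding expect_def
        by (rule cSup_upper[OF _ Ebdd]) (use ssim sY in \<open>auto simp: le_fun_def\<close>)
      finally show "L Y \<le> expect F P Y + e" using Lconst by simp
    qed
    from le ge show ?thesis by simp
  qed
  have up: "Hstar F C H P \<le> ereal (L X - R X)" unfolding Hstar_def
  proof (rule SUP_least)
    fix Z assume ZC: "Z \<in> C"
    have ZB: "Z \<in> Bb F" using ZC CB by blast
    have bZ: "bnd Z" using ZB by (rule Bb_bnd)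
    have "L Z - L X = L (\<lambda>x. Z x - X x)" using Ldiff[OF bZ bX] by simp
    also have "\<dots> \<le> R (\<lambda>x. X x + (Z x - X x)) - R X" by (rule Ldom[OF bnd_diff[OF bZ bX]])
    also have "\<dots> = R Z - R X" by simp
    also have "\<dots> \<le> H Z - R X" using R_le_H[OF ZC] by simp
    finally show "ereal (expect F P Z - H Z) \<le> ereal (L X - R X)" using expL[OF ZB] by simp
  qed
  have lo: "ereal (L X - R X) \<le> Hstar F C H P"
    using GI[OF Pba XB] RMax_R[OF bX] expL[OF XB] ereal_minus_le_iff by simp
  from up lo have "Hstar F C H P = ereal (expect F P X - R X)" using expL[OF XB] by simp
  with Pba show ?thesis by blast
qed

end

theorem theorem3p1:
  fixes F :: "'a set set" and C :: "('a \<Rightarrow> real) set" and H :: "('a \<Rightarrow> real) \<Rightarrow> real"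
  assumes "sigma_algebra UNIV F"
    and "C \<subseteq> Bb F"
    and "\<forall>X\<in>C. \<forall>Y\<in>C. (\<lambda>x. X x + Y x) \<in> C"
    and "\<forall>X\<in>C. \<forall>a::real. (\<lambda>x. a * X x) \<in> C"
    and "\<forall>c::real. (\<lambda>x. c) \<in> C"
    and "premium_principle F C H"
    and "convex_pp C H"
  shows "(\<forall>X\<in>Bb F. \<exists>P\<in>ba1 F. RMax C H X = ereal (expect F P X) - Hstar F C H P \<and>
            (\<forall>Q\<in>ba1 F. ereal (expect F Q X) - Hstar F C H Q \<le> RMax C H X))
       \<and> (\<forall>P\<in>ba1 F. Hstar F C H P = (SUP X\<in>Bb F. ereal (expect F P X) - RMax C H X))"
proof -
  interpret setting F C H using assms by (simp add: setting_def)
  show ?thesis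
  proof (intro conjI ballI)
    fix X assume XB: "X \<in> Bb F"
    have bX: "bnd X" using XB by (rule Bb_bnd)
    obtain P where P: "P \<in> ba1 F" "Hstar F C H P = ereal (expect F P X - R X)"
      using main1[OF XB] by blast
    have "RMax C H X = ereal (expect F P X) - Hstar F C H P" using P(2) RMax_R[OF bX] by simp
    then show "\<exists>P\<in>ba1 F. RMax C H X = ereal (expect F P X) - Hstar F C H P \<and>
            (\<forall>Q\<in>ba1 F. ereal (expect F Q X) - Hstar F C H Q \<le> RMax C H X)"
      using P(1) GI[OF _ XB] by blast
  next
    fix P assume P: "P \<in> ba1 F"
    show "Hstar F C H P = (SUP X\<in>Bb F. ereal (expect F P X) - RMax C H X)"
    proof (rule antisym)
      show "Hstar F C H P \<le> (SUP X\<in>Bb F. ereal (expect F P X) - RMax C H X)"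
        unfolding Hstar_def
      proof (rule SUP_least)
        fix Z assume ZC: "Z \<in> C"
        have ZB: "Z \<in> Bb F" using ZC assms(2) by blast
        have bZ: "bnd Z" using ZB by (rule Bb_bnd)
        have "ereal (expect F P Z - H Z) \<le> ereal (expect F P Z) - RMax C H Z"
          using RMax_R[OF bZ] R_le_H[OF ZC] by simp
        also have "\<dots> \<le> (SUP X\<in>Bb F. ereal (expect F P X) - RMax C H X)" by (rule SUP_upper[OF ZB])
        finally show "ereal (expect F P Z - H Z) \<le> (SUP X\<in>Bb F. ereal (expect F P X) - RMax C H X)" .
      qed
      show "(SUP X\<in>Bb F. ereal (expect F P X) - RMax C H X) \<le> Hstar F C H P"
      proof (rule SUP_least)
        fix X assume XB: "X \<in> Bb F"
        have bX: "bnd X" using XB by (rule Bb_bnd)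
        have "ereal (expect F P X) - Hstar F C H P \<le> RMax C H X" by (rule GI[OF P XB])
        then show "ereal (expect F P X) - RMax C H X \<le> Hstar F C H P"
          using RMax_R[OF bX] ereal_minus_le_iff by simp
      qed
    qed
  qed
qed

end
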